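(* Let $n,m,p$ be positive integers and $A\in\mathbb{R}^{n\times n}$, $B\in\mathbb{R}^{n\times m}$, $C\in\mathbb{R}^{p\times n}$, $D\in\mathbb{R}^{p\times m}$ with $DD^T$ positive definite and $BD^T=0$. Fix $\tau\in[0,1]$, $c>0$, $V_0\in\mathcal{Q}_+^n$, and let $P_k,V_k,\theta_k$ be generated by the robust Kalman filter with parameter $\tau$ and tolerance $c$; set $\Phi_k=P_{k+1}^{-1}-V_{k+1}^{-1}$. Let $k\ge0$ and let $\bar d>0$ be such that $P_{k+1}\ge\bar dI_n$. Then $$\Phi_k\le\begin{cases}\dfrac{1-(1-\theta_k(1-\tau)\bar d)^{\frac1{1-\tau}}}{\bar d}\,I_n, & 0\le\tau<1,\\[3mm] \dfrac{1-\exp(-\theta_k\bar d)}{\bar d}\,I_n, & \tau=1.\end{cases}$$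
   Context: $\mathcal{Q}_+^n$ denotes the real symmetric positive definite $n\times n$ matrices; $\le$ is the Loewner order; $\|\cdot\|$ the spectral norm. For $P$ positive semidefinite, $L_P$ is any matrix with $P=L_PL_P^T$; matrix powers and $\exp$ of symmetric matrices are defined through eigendecomposition. The function $\gamma_\tau$: for positive semidefinite $P$ and $\theta\ge0$ with $\theta(1-\tau)\|P\|<1$, $\gamma_0(P,\theta)=-\log\det((I_n-\theta P)^{-1})+\mathrm{tr}((I_n-\theta P)^{-1}-I_n)$; for $0<\tau<1$, $\gamma_\tau(P,\theta)=\mathrm{tr}\big(-\frac{1}{\tau(1-\tau)}(I_n-\theta(1-\tau)L_P^TL_P)^{\frac{\tau}{\tau-1}}+\frac1{1-\tau}(I_n-\theta(1-\tau)L_P^TL_P)^{\frac{1}{\tau-1}}+\frac1\tau I_n\big)$; $\gamma_1(P,\theta)=\mathrm{tr}(\exp(\theta L_P^TL_P)(\theta L_P^TL_P-I_n)+I_n)$. Robust Kalman filter with parameter $\tau$ and tolerance $c$: for $k=0,1,\dots$, $P_{k+1}=A(V_k^{-1}+C^T(DD^T)^{-1}C)^{-1}A^T+BB^T$; $\theta_k$ is the unique $\theta>0$ with $\theta(1-\tau)\|P_{k+1}\|<1$ and $\gamma_\tau(P_{k+1},\theta)=c$; $V_{k+1}=L_{P_{k+1}}(I_n-\theta_k(1-\tau)L_{P_{k+1}}^TL_{P_{k+1}})^{\frac1{\tau-1}}L_{P_{k+1}}^T$ if $0\le\tau<1$ and $V_{k+1}=L_{P_{k+1}}\exp(\theta_kL_{P_{k+1}}^TL_{P_{k+1}})L_{P_{k+1}}^T$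 if $\tau=1$. *)

theory Defs
  imports "HOL-Analysis.Analysis"
begin

definition posdef :: "real^'n^'n \<Rightarrow> bool" where
  "posdef S \<longleftrightarrow> transpose S = S \<and> (\<forall>x. x \<noteq> 0 \<longrightarrow> 0 < x \<bullet> (S *v x))"

definition psd :: "real^'n^'n \<Rightarrow> bool" where
  "psd S \<longleftrightarrow> transpose S = S \<and> (\<forall>x. 0 \<le> x \<bullet> (S *v x))"

definition loewner_le :: "real^'n^'n \<Rightarrow> real^'n^'n \<Rightarrow> bool" where
  "loewner_le X Y \<longleftrightarrow> psd (Y - X)"

definition specnorm :: "real^'n^'m \<Rightarrow> real" where
  "specnorm M = onorm (\<lambda>x. M *v x)"

definition mfun :: "(real \<Rightarrow> real) \<Rightarrow> real^'n^'n \<Rightarrow> real^'n^'n" where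
  "mfun f S = (THE M. \<forall>v lam. S *v v = lam *\<^sub>R v \<longrightarrow> M *v v = f lam *\<^sub>R v)"

text \<open>gamma_tau(P, theta), with L a factor P = L L^T.\<close>
definition gamma :: "real \<Rightarrow> real^'n^'n \<Rightarrow> real^'n^'n \<Rightarrow> real \<Rightarrow> real" where
  "gamma tau P L theta =
    (if tau = 0 then
       - ln (det (matrix_inv (mat 1 - theta *\<^sub>R P)))
       + trace (matrix_inv (mat 1 - theta *\<^sub>R P) - mat 1)
     else if tau < 1 then
       trace (- (1 / (tau * (1 - tau))) *\<^sub>R
                mfun (\<lambda>x. x powr (tau / (tau - 1))) (mat 1 - (theta * (1 - tau)) *\<^sub>R (transpose L ** L))
              + (1 / (1 - tau)) *\<^sub>R
                mfun (\<lambda>x. x powr (1 / (tau - 1))) (mat 1 - (theta * (1 - tau)) *\<^sub>R (transpose L ** L))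
              + (1 / tau) *\<^sub>R mat 1)
     else
       trace (mfun exp (theta *\<^sub>R (transpose L ** L)) ** (theta *\<^sub>R (transpose L ** L) - mat 1)
              + mat 1))"

end

theory Submission
  imports Defs
begin

lemma quad_zero:
  fixes r bb :: real
  assumes r: "r \<ge> 0" and h: "\<And>t::real. 2*t*r + t*t * bb \<le> 0"
  shows "r = 0"
proof (rule ccontr)
  assume "r \<noteq> 0" hence rp: "r > 0" using r by simp
  define t where "t = r / (\<bar>bb\<bar> + 1)"
  have "2*t*r + t*t * bb \<le> 0" by (rule h)
  hence "(2*t*r + t*t * bb) * ((\<bar>bb\<bar>+1)*(\<bar>bb\<bar>+1)) \<le> 0"
    by (simp add: mult_nonpos_nonneg)
  also have "(2*t*r + t*t * bb) * ((\<bar>bb\<bar>+1)*(\<bar>bb\<bar>+1)) = 2*r*(t*(\<bar>bb\<bar>+1))*(\<bar>bb\<bar>+1) + (t*(\<bar>bb\<bar>+1))*(t*(\<bar>bb\<bar>+1))*bb"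
    by (simp add: algebra_simps)
  also have "t*(\<bar>bb\<bar>+1) = r" unfolding t_def by (simp add: field_simps add_pos_nonneg)
  also have "2*r*r*(\<bar>bb\<bar>+1) + r*r*bb = r*r*(2*(\<bar>bb\<bar>+1) + bb)" by (simp add: algebra_simps)
  finally have "r*r*(2*(\<bar>bb\<bar>+1) + bb) \<le> 0" .
  moreover have "r*r*(2*(\<bar>bb\<bar>+1) + bb) > 0" proof -
    have "2*(\<bar>bb\<bar>+1) + bb > 0" by (smt (verit) abs_ge_minus_self)
    thus ?thesis using rp by simp
  qed
  ultimately show False by simp
qed

lemma quad_aux:
  fixes lam t a q c e :: real
  shows "lam + 2*t*a + t*t*q \<le> lam*(1 + 2*t*c + t*t*e) \<Longrightarrow> a = e + lam*c \<Longrightarrow> 2*t*e + t*t*(q - lam*e) \<le> 0"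
  by (simp add: algebra_simps)

lemma sym_dot:
  fixes M :: "real^'n^'n"
  assumes "transpose M = M"
  shows "x \<bullet> (M *v y) = (M *v x) \<bullet> y"
  by (metis assms dot_lmul_matrix inner_commute transpose_matrix_vector)

lemma eigvec_in_subspace:
  fixes M :: "real^'n^'n"
  assumes sym: "transpose M = M" and W: "subspace W" and inv: "\<And>x. x\<in>W \<Longrightarrow> M *v x \<in> W"
    and w: "w \<in> W" "w \<noteq> 0"
  shows "\<exists>x lam. x \<in> W \<and> norm x = 1 \<and> M *v x = lam *\<^sub>R x"
proof -
  define K where "K = W \<inter> sphere 0 1"
  have "compact K" unfolding K_def using compact_Int_closed[OF compact_sphere closed_subspace[OF W]]
    by (simp add: inf_commute)
  moreover have "K \<noteq> {}"
  proof -
    have "(1/norm w) *\<^sub>R w \<in> K" using w W unfolding K_def by (auto simp: subspace_scale)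
    thus ?thesis by auto
  qed
  moreover have "continuous_on K (\<lambda>x. x \<bullet> (M *v x))"
    by (auto intro!: continuous_intros)
  ultimately obtain x0 where x0: "x0 \<in> K" and mx: "\<And>y. y \<in> K \<Longrightarrow> y \<bullet> (M *v y) \<le> x0 \<bullet> (M *v x0)"
    using continuous_attains_sup by metis
  define lam where "lam = x0 \<bullet> (M *v x0)"
  have x0W: "x0 \<in> W" and nx0: "norm x0 = 1" using x0 by (auto simp: K_def)
  have bound: "z \<bullet> (M *v z) \<le> lam * (z \<bullet> z)" if zW: "z \<in> W" for z
  proof (cases "z = 0")
    case True then show ?thesis by simp
  next
    case False
    define u where "u = (1/norm z) *\<^sub>R z"
    have "u \<in> K" using zW False W unfolding K_def u_def by (auto simp: subspace_scale)
    hence "u \<bullet> (M *v u) \<le> lam" using mx lam_def by blast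
    moreover have "z = norm z *\<^sub>R u" using False unfolding u_def by simp
    hence "z \<bullet> (M *v z) = (norm z * norm z) * (u \<bullet> (M *v u))"
      by (metis inner_scaleR_left inner_scaleR_right matrix_vector_mult_scaleR mult.assoc)
    moreover have "z \<bullet> z = norm z * norm z" by (simp add: dot_square_norm power2_eq_square)
    ultimately show ?thesis
      by (metis mult.commute mult_left_mono zero_le_square)
  qed
  define y where "y = M *v x0 - lam *\<^sub>R x0"
  have yW: "y \<in> W" unfolding y_def using x0W inv W by (simp add: subspace_diff subspace_scale)
  have xx: "x0 \<bullet> x0 = 1" using nx0 by (simp add: dot_square_norm)
  have yx: "y \<bullet> (M *v x0) - lam * (y \<bullet> x0) = y \<bullet> y"
    unfolding y_def by (simp add: inner_diff_right inner_diff_left algebra_simps)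
  have "2*t*(y \<bullet> y) + t*t*(y \<bullet> (M *v y) - lam * (y \<bullet> y)) \<le> 0" for t
  proof -
    have "(x0 + t *\<^sub>R y) \<in> W" using x0W yW W by (simp add: subspace_add subspace_scale)
    from bound[OF this]
    have "(x0 + t *\<^sub>R y) \<bullet> (M *v (x0 + t *\<^sub>R y)) \<le> lam * ((x0 + t *\<^sub>R y) \<bullet> (x0 + t *\<^sub>R y))" .
    moreover have "(x0 + t *\<^sub>R y) \<bullet> (M *v (x0 + t *\<^sub>R y)) = lam + 2*t*(y \<bullet> (M *v x0)) + t*t*(y \<bullet> (M *v y))"
      using sym_dot[OF sym, of x0 y] unfolding lam_def
      by (simp add: matrix_vector_right_distrib matrix_vector_mult_scaleR inner_add_left inner_add_right
           algebra_simps inner_commute)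
    moreover have "(x0 + t *\<^sub>R y) \<bullet> (x0 + t *\<^sub>R y) = 1 + 2*t*(y \<bullet> x0) + t*t*(y \<bullet> y)"
      using xx by (simp add: inner_add_left inner_add_right algebra_simps inner_commute)
    ultimately have "lam + 2*t*(y \<bullet> (M *v x0)) + t*t*(y \<bullet> (M *v y)) \<le> lam*(1 + 2*t*(y \<bullet> x0) + t*t*(y \<bullet> y))"
      by simp
    moreover have "y \<bullet> (M *v x0) = y \<bullet> y + lam * (y \<bullet> x0)" using yx by simp
    ultimately show ?thesis by (rule quad_aux)
  qed
  hence "y \<bullet> y = 0" by (intro quad_zero) auto
  hence "M *v x0 = lam *\<^sub>R x0" unfolding y_def by simp
  thus ?thesis using x0W nx0 by blast
qed

definition dg :: "('n::finite \<Rightarrow> real) \<Rightarrow> real^'n^'n" where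
  "dg d = (\<chi> i j. if i = j then d i else 0)"

lemma if_mult0: "(if a then b else 0) * (c::real) = (if a then b * c else 0)"
  "(c::real) * (if a then b else 0) = (if a then c * b else 0)" by simp_all

lemma mul_dg: "(U::real^'n^'m) ** dg g = (\<chi> r j. U$r$j * g j)"
  by (simp add: vec_eq_iff matrix_matrix_mult_def dg_def if_mult0)

lemma dg_mul: "dg g ** (U::real^'m^'n) = (\<chi> r j. g r * U$r$j)"
  by (simp add: vec_eq_iff matrix_matrix_mult_def dg_def if_mult0)

lemma dg_mv: "dg g *v (x::real^'n) = (\<chi> i. g i * x$i)"
  by (simp add: vec_eq_iff matrix_vector_mult_def dg_def if_mult0)

lemma transpose_dg[simp]: "transpose (dg g) = dg g"
  by (simp add: vec_eq_iff transpose_def dg_def)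

lemma column_mul: "column j (A ** B) = A *v column j B"
  by (simp add: vec_eq_iff matrix_matrix_mult_def matrix_vector_mult_def column_def)

lemma column_dg_right: "column j ((U::real^'n^'m) ** dg g) = g j *\<^sub>R column j U"
  by (simp add: mul_dg vec_eq_iff column_def)

lemma mat_eq_columns: "(A::'a^'n^'m) = B \<longleftrightarrow> (\<forall>j. column j A = column j B)"
  by (auto simp: vec_eq_iff column_def)

lemma mfun_diag:
  fixes U :: "real^'n^'n"
  assumes U1: "U ** transpose U = mat 1" and U2: "transpose U ** U = mat 1"
  shows "mfun f (U ** dg d ** transpose U) = U ** dg (\<lambda>i. f (d i)) ** transpose U"
  unfolding mfun_def
proof (rule the_equality)
  let ?S = "U ** dg d ** transpose U"
  show "\<forall>v lam. ?S *v v = lam *\<^sub>R v \<longrightarrow> (U ** dg (\<lambda>i. f (d i)) ** transpose U) *v v = f lam *\<^sub>R v"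
  proof (intro allI impI)
    fix v lam assume ev: "?S *v v = lam *\<^sub>R v"
    define c where "c = transpose U *v v"
    have "transpose U *v (?S *v v) = dg d *v c"
      unfolding c_def by (simp only: matrix_vector_mul_assoc matrix_mul_assoc U2 matrix_mul_lid)
    hence "dg d *v c = lam *\<^sub>R c" using ev unfolding c_def by (simp only: matrix_vector_mult_scaleR)
    hence dc: "d i * c$i = lam * c$i" for i by (simp add: dg_mv vec_eq_iff)
    have "dg (\<lambda>i. f (d i)) *v c = f lam *\<^sub>R c"
    proof -
      have "f (d i) * c$i = f lam * c$i" for i
        using dc[of i] by (cases "c$i = 0") auto
      thus ?thesis by (simp add: dg_mv vec_eq_iff)
    qed
    hence "U *v (dg (\<lambda>i. f (d i)) *v c) = f lam *\<^sub>R (U *v c)" by (simp add: matrix_vector_mult_scaleR)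
    moreover have "U *v c = v" unfolding c_def by (simp only: matrix_vector_mul_assoc U1 matrix_vector_mul_lid)
    moreover have "(U ** dg (\<lambda>i. f (d i)) ** transpose U) *v v = U *v (dg (\<lambda>i. f (d i)) *v c)"
      unfolding c_def by (simp only: matrix_vector_mul_assoc matrix_mul_assoc)
    ultimately show "(U ** dg (\<lambda>i. f (d i)) ** transpose U) *v v = f lam *\<^sub>R v"
      by simp
  qed
next
  fix M' assume h: "\<forall>v lam. (U ** dg d ** transpose U) *v v = lam *\<^sub>R v \<longrightarrow> M' *v v = f lam *\<^sub>R v"
  have SU: "(U ** dg d ** transpose U) ** U = U ** dg d"
    by (metis U2 matrix_mul_assoc matrix_mul_rid)
  have "column j (M' ** U) = column j (U ** dg (\<lambda>i. f (d i)))" for j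
  proof -
    have "(U ** dg d ** transpose U) *v column j U = d j *\<^sub>R column j U"
      using arg_cong[OF SU, of "column j"] column_dg_right[of j U d] by (simp only: column_mul)
    hence "M' *v column j U = f (d j) *\<^sub>R column j U" using h by blast
    thus ?thesis using column_dg_right[of j U "\<lambda>i. f (d i)"] by (simp only: column_mul)
  qed
  hence "M' ** U = U ** dg (\<lambda>i. f (d i))" using mat_eq_columns by blast
  hence "M' ** U ** transpose U = U ** dg (\<lambda>i. f (d i)) ** transpose U" by simp
  thus "M' = U ** dg (\<lambda>i. f (d i)) ** transpose U" by (metis U1 matrix_mul_assoc matrix_mul_rid)
qed

lemma spectral_aux:
  fixes M :: "real^'n^'n"
  assumes sym: "transpose M = M"
  shows "finite S \<Longrightarrow> \<exists>(u::'n \<Rightarrow> real^'n) mu. (\<forall>i\<in>S. norm (u i) = 1 \<and> M *v u i = mu i *\<^sub>R u i)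
          \<and> (\<forall>i\<in>S. \<forall>j\<in>S. i \<noteq> j \<longrightarrow> u i \<bullet> u j = 0)"
proof (induction S rule: finite_induct)
  case empty then show ?case by auto
next
  case (insert i S)
  then obtain u mu where un: "\<And>j. j\<in>S \<Longrightarrow> norm (u j) = 1 \<and> M *v u j = mu j *\<^sub>R u j"
    and uo: "\<And>j k. j\<in>S \<Longrightarrow> k\<in>S \<Longrightarrow> j \<noteq> k \<Longrightarrow> u j \<bullet> u k = 0" using insert.IH by metis
  define W where "W = {y. \<forall>x \<in> u ` S. orthogonal x y}"
  have subW: "subspace W" unfolding W_def by (rule subspace_orthogonal_to_vectors)
  have invW: "M *v x \<in> W" if "x \<in> W" for x
  proof -
    have "orthogonal (u j) (M *v x)" if "j \<in> S" for j
    proof -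
      have "u j \<bullet> (M *v x) = (M *v u j) \<bullet> x" by (rule sym_dot[OF sym])
      also have "\<dots> = mu j * (u j \<bullet> x)" using un[OF that] by simp
      also have "u j \<bullet> x = 0" using \<open>x \<in> W\<close> that unfolding W_def orthogonal_def by auto
      finally show ?thesis unfolding orthogonal_def by simp
    qed
    thus ?thesis unfolding W_def by auto
  qed
  have "S \<subset> UNIV" using insert by auto
  hence "card S < CARD('n)" by (simp add: psubset_card_mono)
  moreover have "dim (u ` S) \<le> card (u ` S)" using insert by (intro dim_le_card) (auto intro: span_base)
  moreover have "card (u ` S) \<le> card S" using insert by (simp add: card_image_le)
  ultimately have "dim (u ` S) < DIM(real^'n)" by simp
  then obtain w where w0: "w \<noteq> 0" and wo: "\<And>y. y \<in> span (u ` S) \<Longrightarrow> orthogonal w y"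
    by (meson orthogonal_to_subspace_exists)
  have "w \<in> W" unfolding W_def
  proof (intro CollectI ballI)
    fix x assume "x \<in> u ` S"
    hence "orthogonal w x" using wo span_base by metis
    thus "orthogonal x w" by (simp only: orthogonal_commute)
  qed
  then obtain v lam where vW: "v \<in> W" and vn: "norm v = 1" and ve: "M *v v = lam *\<^sub>R v"
    using eigvec_in_subspace[OF sym subW invW _ w0] by blast
  have vo: "u j \<bullet> v = 0" "v \<bullet> u j = 0" if "j \<in> S" for j
    using vW that unfolding W_def orthogonal_def by (auto simp: inner_commute)
  have A1: "\<forall>j\<in>insert i S. norm ((u(i := v)) j) = 1 \<and> M *v (u(i := v)) j = (mu(i := lam)) j *\<^sub>R (u(i := v)) j"
  proof
    fix j assume "j \<in> insert i S"
    thus "norm ((u(i := v)) j) = 1 \<and> M *v (u(i := v)) j = (mu(i := lam)) j *\<^sub>R (u(i := v)) j"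
      using un[of j] vn ve by (cases "j = i") auto
  qed
  have A2: "\<forall>j\<in>insert i S. \<forall>k\<in>insert i S. j \<noteq> k \<longrightarrow> (u(i := v)) j \<bullet> (u(i := v)) k = 0"
  proof (intro ballI impI)
    fix j k assume "j \<in> insert i S" "k \<in> insert i S" "j \<noteq> k"
    thus "(u(i := v)) j \<bullet> (u(i := v)) k = 0"
      using uo[of j k] vo[of j] vo[of k] insert.hyps(2) by (cases "j = i"; cases "k = i") auto
  qed
  show ?case using A1 A2 by blast
qed

lemma spectral:
  fixes M :: "real^'n^'n"
  assumes sym: "transpose M = M"
  obtains U :: "real^'n^'n" and d where "U ** transpose U = mat 1" "transpose U ** U = mat 1"
    "M = U ** dg d ** transpose U"
proof -
  obtain u :: "'n \<Rightarrow> real^'n" and mu where un: "\<And>i. norm (u i) = 1 \<and> M *v u i = mu i *\<^sub>R u i"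
    and uo: "\<And>i j. i \<noteq> j \<Longrightarrow> u i \<bullet> u j = 0"
    using spectral_aux[OF sym, of UNIV] by auto
  define U :: "real^'n^'n" where "U = transpose (\<chi> i. u i)"
  have col: "column j U = u j" for j by (simp add: U_def vec_eq_iff column_def transpose_def)
  have U2: "transpose U ** U = mat 1"
  proof -
    have "u i \<bullet> u i = 1" for i using un[of i] by (simp add: dot_square_norm)
    thus ?thesis
      unfolding matrix_mult_transpose_dot_column col using uo
      by (simp add: vec_eq_iff mat_def)
  qed
  from U2 have U1: "U ** transpose U = mat 1" using matrix_left_right_inverse by blast
  have Meq: "M = U ** dg mu ** transpose U"
  proof -
    have "M ** U = U ** dg mu"
      unfolding mat_eq_columns proof
      fix j
      have "column j (U ** dg mu) = mu j *\<^sub>R column j U" by (rule column_dg_right)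
      moreover have "column j (M ** U) = M *v column j U" by (rule column_mul)
      ultimately show "column j (M ** U) = column j (U ** dg mu)" using un[of j] by (simp only: col)
    qed
    hence "M ** U ** transpose U = U ** dg mu ** transpose U" by simp
    thus ?thesis by (metis U1 matrix_mul_assoc matrix_mul_rid)
  qed
  show ?thesis by (rule that[OF U1 U2 Meq])
qed

lemma mm_add_r: "((A::real^'n^'m) + B) ** (C::real^'k^'n) = A ** C + B ** C"
  by (simp add: vec_eq_iff matrix_matrix_mult_def sum.distrib algebra_simps)
lemma mm_add_l: "(C::real^'n^'m) ** ((A::real^'k^'n) + B) = C ** A + C ** B"
  by (simp add: vec_eq_iff matrix_matrix_mult_def sum.distrib algebra_simps)
lemma mm_diff_r: "((A::real^'n^'m) - B) ** (C::real^'k^'n) = A ** C - B ** C"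
  by (simp add: vec_eq_iff matrix_matrix_mult_def sum_subtractf algebra_simps)
lemma mm_diff_l: "(C::real^'n^'m) ** ((A::real^'k^'n) - B) = C ** A - C ** B"
  by (simp add: vec_eq_iff matrix_matrix_mult_def sum_subtractf algebra_simps)
lemma mm_scale_l: "(c *\<^sub>R (A::real^'n^'m)) ** (B::real^'k^'n) = c *\<^sub>R (A ** B)"
  by (simp add: vec_eq_iff matrix_matrix_mult_def sum_distrib_left algebra_simps)
lemma mm_scale_r: "(A::real^'n^'m) ** (c *\<^sub>R (B::real^'k^'n)) = c *\<^sub>R (A ** B)"
  by (simp add: vec_eq_iff matrix_matrix_mult_def sum_distrib_left algebra_simps)

lemma dg_one: "dg (\<lambda>i. 1) = mat 1"
  by (simp add: dg_def mat_def vec_eq_iff)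
lemma dg_lin: "dg (\<lambda>i. a i - b i + e i) = dg a - dg b + dg e"
  by (simp add: dg_def vec_eq_iff)
lemma dg_scale: "dg (\<lambda>i. c * a i) = c *\<^sub>R dg a"
  by (simp add: dg_def vec_eq_iff)
lemma dg_dg: "dg a ** dg b = dg (\<lambda>i. a i * b i)"
  unfolding dg_mul by (simp add: dg_def vec_eq_iff)

lemma inv_eq:
  fixes A B :: "real^'n^'n"
  assumes "A ** B = mat 1"
  shows "matrix_inv A = B"
proof -
  have BA: "B ** A = mat 1" using assms matrix_left_right_inverse by blast
  have "A ** matrix_inv A = mat 1 \<and> matrix_inv A ** A = mat 1"
    unfolding matrix_inv_def by (rule someI[of _ B]) (use assms BA in blast)
  hence "matrix_inv A ** A = mat 1" by blast
  hence "matrix_inv A ** (A ** B) = B" by (simp add: matrix_mul_assoc)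
  thus ?thesis using assms by simp
qed

lemma inv_props:
  fixes A :: "real^'n^'n"
  assumes "invertible A"
  shows "A ** matrix_inv A = mat 1" "matrix_inv A ** A = mat 1"
proof -
  obtain B where "A ** B = mat 1" using assms invertible_right_inverse by blast
  thus "A ** matrix_inv A = mat 1" "matrix_inv A ** A = mat 1"
    using inv_eq matrix_left_right_inverse by metis+
qed

lemma psd_congr:
  fixes X :: "real^'n^'n"
  assumes "\<And>i. e i \<ge> 0"
  shows "psd (transpose X ** dg e ** X)"
  unfolding psd_def
proof
  show "transpose (transpose X ** dg e ** X) = transpose X ** dg e ** X"
    by (simp add: matrix_transpose_mul matrix_mul_assoc)
  show "\<forall>x. 0 \<le> x \<bullet> ((transpose X ** dg e ** X) *v x)"
  proof
    fix x
    define y where "y = X *v x"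
    have "x \<bullet> ((transpose X ** dg e ** X) *v x) = x \<bullet> (transpose X *v (dg e *v y))"
      unfolding y_def by (simp only: matrix_vector_mul_assoc matrix_mul_assoc)
    also have "\<dots> = y \<bullet> (dg e *v y)" unfolding y_def
      by (metis dot_lmul_matrix inner_commute transpose_matrix_vector transpose_transpose)
    also have "\<dots> = (\<Sum>i\<in>UNIV. e i * (y$i * y$i))"
      by (simp add: inner_vec_def dg_mv algebra_simps)
    also have "\<dots> \<ge> 0" 
    proof (rule sum_nonneg)
      fix i show "0 \<le> e i * (y$i * y$i)" using assms[of i] by simp
    qed
    finally show "0 \<le> x \<bullet> ((transpose X ** dg e ** X) *v x)" .
  qed
qed

lemma core:
  fixes L U :: "real^'n^'n"
  assumes L: "invertible L"
    and U1: "U ** transpose U = mat 1" and U2: "transpose U ** U = mat 1"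
    and M: "transpose L ** L = U ** dg mu ** transpose U"
    and g: "\<And>i. g i \<noteq> 0"
    and e: "\<And>i. c * mu i - 1 + 1 / g i \<ge> 0"
  shows "loewner_le (matrix_inv (L ** transpose L) - matrix_inv (L ** (U ** dg g ** transpose U) ** transpose L)) (c *\<^sub>R mat 1)"
proof -
  define Li where "Li = matrix_inv L"
  have LLi: "L ** Li = mat 1" and LiL: "Li ** L = mat 1" using inv_props[OF L] unfolding Li_def by auto
  have T1: "transpose L ** transpose Li = mat 1" using LiL by (metis matrix_transpose_mul transpose_mat)
  have T2: "transpose Li ** transpose L = mat 1" using LLi by (metis matrix_transpose_mul transpose_mat)
  define G where "G = U ** dg g ** transpose U"
  define H where "H = U ** dg (\<lambda>i. 1 / g i) ** transpose U"
  have "G ** H = U ** dg g ** (transpose U ** U) ** dg (\<lambda>i. 1 / g i) ** transpose U"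
    unfolding G_def H_def by (simp add: matrix_mul_assoc)
  also have "\<dots> = U ** (dg g ** dg (\<lambda>i. 1 / g i)) ** transpose U"
    by (simp add: U2 matrix_mul_assoc)
  also have "dg g ** dg (\<lambda>i. 1 / g i) = mat 1" unfolding dg_dg using g by (simp add: dg_one)
  finally have GH: "G ** H = mat 1" using U1 by simp
  have "(L ** transpose L) ** (transpose Li ** Li) = L ** (transpose L ** transpose Li) ** Li"
    by (simp add: matrix_mul_assoc)
  hence invP: "matrix_inv (L ** transpose L) = transpose Li ** Li"
    using T1 LLi by (intro inv_eq) simp
  have "(L ** G ** transpose L) ** (transpose Li ** H ** Li) = L ** G ** (transpose L ** transpose Li) ** H ** Li"
    by (simp add: matrix_mul_assoc)
  also have "\<dots> = L ** (G ** H) ** Li" using T1 by (simp add: matrix_mul_assoc)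
  finally have invV: "matrix_inv (L ** G ** transpose L) = transpose Li ** H ** Li"
    using GH LLi by (intro inv_eq) simp
  define ee where "ee = (\<lambda>i. c * mu i - 1 + 1 / g i)"
  have K: "c *\<^sub>R (transpose L ** L) - mat 1 + H = U ** dg ee ** transpose U"
  proof -
    have "U ** dg ee ** transpose U = U ** (dg (\<lambda>i. c * mu i) - dg (\<lambda>i. 1) + dg (\<lambda>i. 1 / g i)) ** transpose U"
      unfolding ee_def by (subst dg_lin[symmetric]) (rule refl)
    also have "\<dots> = c *\<^sub>R (U ** dg mu ** transpose U) - U ** transpose U + H"
      unfolding H_def dg_scale dg_one
      by (simp add: mm_add_l mm_add_r mm_diff_l mm_diff_r mm_scale_l mm_scale_r)
    finally show ?thesis using M U1 by simp
  qed
  have Li_M: "transpose Li ** (transpose L ** L) ** Li = mat 1"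
  proof -
    have "transpose Li ** (transpose L ** L) ** Li = (transpose Li ** transpose L) ** (L ** Li)"
      by (simp add: matrix_mul_assoc)
    thus ?thesis using T2 LLi by simp
  qed
  have "c *\<^sub>R mat 1 - (matrix_inv (L ** transpose L) - matrix_inv (L ** G ** transpose L))
      = transpose Li ** (c *\<^sub>R (transpose L ** L) - mat 1 + H) ** Li"
    unfolding invP invV
    by (simp add: mm_add_l mm_add_r mm_diff_l mm_diff_r mm_scale_l mm_scale_r Li_M)
  also have "\<dots> = transpose (transpose U ** Li) ** dg ee ** (transpose U ** Li)"
    unfolding K by (simp add: matrix_transpose_mul matrix_mul_assoc)
  finally have eq: "c *\<^sub>R mat 1 - (matrix_inv (L ** transpose L) - matrix_inv (L ** G ** transpose L))
      = transpose (transpose U ** Li) ** dg ee ** (transpose U ** Li)" .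
  show ?thesis unfolding loewner_le_def G_def[symmetric] eq
    by (rule psd_congr) (use e in \<open>simp add: ee_def\<close>)
qed

lemma scal_pow:
  fixes a d m p :: real
  assumes d: "0 < d" "d \<le> m" and a: "0 \<le> a" "a * m < 1" and p: "1 \<le> p"
  shows "(1 - (1 - a * d) powr p) / d * m - 1 + (1 - a * m) powr p \<ge> 0"
proof -
  define t where "t = d / m"
  have m: "m > 0" using d by linarith
  have t01: "0 \<le> t" "t \<le> 1" unfolding t_def using d m by auto
  have eq: "(1 - a * d) = (1 - t) *\<^sub>R 1 + t *\<^sub>R (1 - a * m)" unfolding t_def using m by (simp add: field_simps)
  have "(\<lambda>x. x powr p) (1 - a * d) \<le> (1 - t) * (\<lambda>x. x powr p) 1 + t * (\<lambda>x. x powr p) (1 - a * m)"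
    by (subst eq, rule convex_onD[OF powr_convex[OF p] t01]) (use a in auto)
  hence "(1 - a * d) powr p \<le> (1 - t) + t * (1 - a * m) powr p" by simp
  hence "t * (1 - (1 - a * m) powr p) \<le> 1 - (1 - a * d) powr p" by (simp add: algebra_simps)
  hence tt: "t * (1 - (1 - a * m) powr p) * (m / d) \<le> (1 - (1 - a * d) powr p) * (m / d)"
    using d m by (intro mult_right_mono) auto
  have "1 - (1 - a * m) powr p = t * (1 - (1 - a * m) powr p) * (m / d)" unfolding t_def using d m by (simp add: field_simps)
  also note tt
  also have "(1 - (1 - a * d) powr p) * (m / d) = (1 - (1 - a * d) powr p) / d * m" by simp
  finally have "1 - (1 - a * m) powr p \<le> (1 - (1 - a * d) powr p) / d * m" .
  thus ?thesis by simp
qed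

lemma scal_exp:
  fixes th d m :: real
  assumes d: "0 < d" "d \<le> m"
  shows "(1 - exp (- th * d)) / d * m - 1 + exp (- th * m) \<ge> 0"
proof -
  define t where "t = d / m"
  have m: "m > 0" using d by linarith
  have t01: "0 \<le> t" "t \<le> 1" unfolding t_def using d m by auto
  have eq: "- th * d = (1 - t) *\<^sub>R 0 + t *\<^sub>R (- th * m)" unfolding t_def using m by (simp add: field_simps)
  have "exp (- th * d) \<le> (1 - t) * exp 0 + t * exp (- th * m)"
    by (subst eq, rule convex_onD[OF exp_convex t01]) auto
  hence "exp (- th * d) \<le> (1 - t) + t * exp (- th * m)" by simp
  hence "t * (1 - exp (- th * m)) \<le> 1 - exp (- th * d)" by (simp add: algebra_simps)
  hence tt: "t * (1 - exp (- th * m)) * (m / d) \<le> (1 - exp (- th * d)) * (m / d)"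
    using d m by (intro mult_right_mono) auto
  have "1 - exp (- th * m) = t * (1 - exp (- th * m)) * (m / d)" unfolding t_def using d m by (simp add: field_simps)
  also note tt
  also have "(1 - exp (- th * d)) * (m / d) = (1 - exp (- th * d)) / d * m" by simp
  finally have "1 - exp (- th * m) \<le> (1 - exp (- th * d)) / d * m" .
  thus ?thesis by simp
qed

theorem lemma3:
  fixes A :: "real^'n^'n" and B :: "real^'m^'n" and C :: "real^'n^'p" and D :: "real^'m^'p"
    and tau c dbar :: real and k :: nat
    and P V L :: "nat \<Rightarrow> real^'n^'n" and theta :: "nat \<Rightarrow> real"
  assumes DD: "posdef (D ** transpose D)"
    and BD: "B ** transpose D = 0"
    and tau: "0 \<le> tau" "tau \<le> 1"
    and c: "c > 0"
    and V0: "posdef (V 0)"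
    and Prec: "\<And>j. P (Suc j) = A ** matrix_inv (matrix_inv (V j)
                     + transpose C ** matrix_inv (D ** transpose D) ** C) ** transpose A
                   + B ** transpose B"
    and Lfac: "\<And>j. P (Suc j) = L j ** transpose (L j)"
    and th_pos: "\<And>j. theta j > 0"
    and th_rng: "\<And>j. theta j * (1 - tau) * specnorm (P (Suc j)) < 1"
    and th_eq: "\<And>j. gamma tau (P (Suc j)) (L j) (theta j) = c"
    and th_uniq: "\<And>j t. t > 0 \<Longrightarrow> t * (1 - tau) * specnorm (P (Suc j)) < 1 \<Longrightarrow>
                     gamma tau (P (Suc j)) (L j) t = c \<Longrightarrow> t = theta j"
    and Vrec: "\<And>j. V (Suc j) =
        (if tau < 1 then
           L j ** mfun (\<lambda>x. x powr (1 / (tau - 1)))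
                    (mat 1 - (theta j * (1 - tau)) *\<^sub>R (transpose (L j) ** L j)) ** transpose (L j)
         else
           L j ** mfun exp (theta j *\<^sub>R (transpose (L j) ** L j)) ** transpose (L j))"
    and dbar: "dbar > 0"
    and Pk: "loewner_le (dbar *\<^sub>R mat 1) (P (Suc k))"
  shows "loewner_le (matrix_inv (P (Suc k)) - matrix_inv (V (Suc k)))
          ((if tau < 1 then
              (1 - (1 - theta k * (1 - tau) * dbar) powr (1 / (1 - tau))) / dbar
            else (1 - exp (- theta k * dbar)) / dbar) *\<^sub>R mat 1)"
proof -
  define Pk where "Pk = P (Suc k)"
  define Lk where "Lk = L k"
  define th where "th = theta k"
  have PL: "Pk = Lk ** transpose Lk" using Lfac unfolding Pk_def Lk_def by simp
  have psdP: "dbar * (x \<bullet> x) \<le> x \<bullet> (Pk *v x)" for x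
  proof -
    have "0 \<le> x \<bullet> ((Pk - dbar *\<^sub>R mat 1) *v x)" using Pk unfolding loewner_le_def psd_def Pk_def by blast
    also have "(Pk - dbar *\<^sub>R mat 1) *v x = Pk *v x - dbar *\<^sub>R x"
      by (simp add: matrix_vector_mult_diff_rdistrib scaleR_matrix_vector_assoc[symmetric])
    finally show ?thesis by (simp add: inner_diff_right)
  qed
  have quadL: "x \<bullet> (Pk *v x) = (transpose Lk *v x) \<bullet> (transpose Lk *v x)" for x
    unfolding PL by (metis dot_lmul_matrix matrix_vector_mul_assoc transpose_matrix_vector)
  have invLt: "invertible (transpose Lk)"
    unfolding invertible_left_inverse matrix_left_invertible_ker
  proof (intro allI impI)
    fix x assume "transpose Lk *v x = 0"
    hence "x \<bullet> (Pk *v x) = 0" using quadL by simp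
    hence "dbar * (x \<bullet> x) \<le> 0" using psdP by metis
    hence "x \<bullet> x \<le> 0" using dbar by (simp add: mult_le_0_iff)
    thus "x = 0" by (metis inner_eq_zero_iff inner_ge_zero order_antisym)
  qed
  have invL: "invertible Lk" using transpose_invertible[OF invLt] by simp
  define M where "M = transpose Lk ** Lk"
  have symM: "transpose M = M" by (simp add: M_def matrix_transpose_mul)
  obtain U :: "real^'n^'n" and mu :: "'n \<Rightarrow> real" where U1: "U ** transpose U = mat 1" and U2: "transpose U ** U = mat 1"
    and MU: "M = U ** dg mu ** transpose U" using spectral[OF symM] by blast
  have MUU: "M ** U = U ** dg mu" unfolding MU by (metis U2 matrix_mul_assoc matrix_mul_rid)
  have eig: "dbar \<le> mu i \<and> mu i \<le> specnorm Pk" for i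
  proof -
    define e where "e = column i U"
    have Me: "M *v e = mu i *\<^sub>R e"
      using arg_cong[OF MUU, of "column i"] column_dg_right[of i U mu] unfolding e_def by (simp only: column_mul)
    have e0: "e \<noteq> 0"
    proof
      assume "e = 0"
      hence "column i (transpose U ** U) = 0" unfolding e_def column_mul by simp
      hence "column i (mat 1 :: real^'n^'n) $ i = 0" using U2 by simp
      thus False by (simp add: column_def mat_def)
    qed
    define w where "w = Lk *v e"
    have w0: "w \<noteq> 0"
    proof
      assume "w = 0"
      hence "Lk *v e = Lk *v 0" unfolding w_def by simp
      thus False using inj_matrix_vector_mult[OF invL] e0 by (meson injD)
    qed
    have "Pk *v w = (Lk ** M) *v e" unfolding PL w_def M_def by (simp add: matrix_vector_mul_assoc matrix_mul_assoc)
    also have "\<dots> = Lk *v (M *v e)" by (simp only: matrix_vector_mul_assoc)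
    also have "\<dots> = mu i *\<^sub>R w" unfolding Me w_def by (simp add: matrix_vector_mult_scaleR)
    finally have Pw: "Pk *v w = mu i *\<^sub>R w" .
    have ww: "w \<bullet> w > 0" using w0 by simp
    have "dbar * (w \<bullet> w) \<le> mu i * (w \<bullet> w)" using psdP[of w] Pw by simp
    hence d1: "dbar \<le> mu i" using ww by simp
    have "norm (Pk *v w) \<le> specnorm Pk * norm w"
      unfolding specnorm_def by (rule onorm[OF matrix_vector_mul_bounded_linear])
    hence "\<bar>mu i\<bar> * norm w \<le> specnorm Pk * norm w" using Pw by simp
    hence "\<bar>mu i\<bar> \<le> specnorm Pk" using w0 by simp
    thus ?thesis using d1 by simp
  qed
  have Mt: "transpose Lk ** Lk = U ** dg mu ** transpose U" using MU M_def by simp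
  have thp: "th > 0" using th_pos unfolding th_def by simp
  have rng: "th * (1 - tau) * specnorm Pk < 1" using th_rng[of k] unfolding th_def Pk_def .
  show ?thesis
  proof (cases "tau < 1")
    case True
    define a where "a = th * (1 - tau)"
    have a0: "a \<ge> 0" unfolding a_def using thp True by simp
    have am: "a * mu i < 1" for i
    proof -
      have "a * mu i \<le> a * specnorm Pk" using eig[of i] a0 by (simp add: mult_left_mono)
      thus ?thesis using rng unfolding a_def by simp
    qed
    have "dg (\<lambda>i. 1 - a * mu i) = mat 1 - a *\<^sub>R dg mu" by (simp add: dg_def mat_def vec_eq_iff)
    hence Aeq: "mat 1 - a *\<^sub>R M = U ** dg (\<lambda>i. 1 - a * mu i) ** transpose U"
      unfolding MU using U1 by (simp add: mm_diff_l mm_diff_r mm_scale_l mm_scale_r)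
    define gv where "gv = (\<lambda>i. (1 - a * mu i) powr (1 / (tau - 1)))"
    have Vk: "V (Suc k) = Lk ** (U ** dg gv ** transpose U) ** transpose Lk"
      using Vrec[of k] True unfolding gv_def Lk_def[symmetric] th_def[symmetric] a_def[symmetric]
        M_def[symmetric] Aeq mfun_diag[OF U1 U2] by simp
    have gv0: "gv i \<noteq> 0" for i unfolding gv_def using am[of i] by simp
    have ee: "(1 - (1 - a * dbar) powr (1 / (1 - tau))) / dbar * mu i - 1 + 1 / gv i \<ge> 0" for i
    proof -
      have "1 / gv i = (1 - a * mu i) powr (- (1 / (tau - 1)))" unfolding gv_def by (simp add: powr_minus_divide)
      also have "- (1 / (tau - 1)) = 1 / (1 - tau)" using True by (simp add: field_simps)
      finally have "1 / gv i = (1 - a * mu i) powr (1 / (1 - tau))" .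
      moreover have "1 \<le> 1 / (1 - tau)" using True tau by (simp add: field_simps)
      ultimately show ?thesis using scal_pow[OF dbar _ a0 am] eig[of i] by simp
    qed
    have "loewner_le (matrix_inv (Lk ** transpose Lk) - matrix_inv (Lk ** (U ** dg gv ** transpose U) ** transpose Lk))
        (((1 - (1 - a * dbar) powr (1 / (1 - tau))) / dbar) *\<^sub>R mat 1)"
      by (rule core[OF invL U1 U2 Mt gv0 ee])
    thus ?thesis using True unfolding Vk PL[symmetric] Pk_def a_def th_def by simp
  next
    case False
    hence t1: "tau = 1" using tau by simp
    have Aeq: "th *\<^sub>R M = U ** dg (\<lambda>i. th * mu i) ** transpose U"
      unfolding MU dg_scale by (simp add: mm_scale_l mm_scale_r)
    define gv where "gv = (\<lambda>i. exp (th * mu i))"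
    have Vk: "V (Suc k) = Lk ** (U ** dg gv ** transpose U) ** transpose Lk"
      using Vrec[of k] False unfolding gv_def Lk_def[symmetric] th_def[symmetric]
        M_def[symmetric] Aeq mfun_diag[OF U1 U2] by simp
    have gv0: "gv i \<noteq> 0" for i unfolding gv_def by simp
    have ee: "(1 - exp (- th * dbar)) / dbar * mu i - 1 + 1 / gv i \<ge> 0" for i
    proof -
      have "1 / gv i = exp (- th * mu i)" unfolding gv_def by (simp add: exp_minus field_simps)
      thus ?thesis using scal_exp[OF dbar, of "mu i" th] eig[of i] by simp
    qed
    have "loewner_le (matrix_inv (Lk ** transpose Lk) - matrix_inv (Lk ** (U ** dg gv ** transpose U) ** transpose Lk))
        (((1 - exp (- th * dbar)) / dbar) *\<^sub>R mat 1)"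
      by (rule core[OF invL U1 U2 Mt gv0 ee])
    thus ?thesis using False unfolding Vk PL[symmetric] Pk_def th_def by simp
  qed
qed

end
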